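(* Fix an integer $k\geq1$ and $V=\{0,\ldots,k\}$. Let $\varphi$ be a Boolean function on $V$ all of whose satisfying valuations have even size. Then there exists a Boolean function $\check\varphi$ on $V$ in canonical form such that $\check\varphi\simeq\varphi$.
   Context: A valuation is a subset $\nu\subseteq V$; $\nu^{(l)}$ is $\nu$ with membership of $l$ flipped. A Boolean function on $V$ is a map $\varphi:2^V\to\{\text{false},\text{true}\}$; $\mathrm{sat}(\varphi)$ is its set of satisfying valuations. $\varphi$ is in canonical form if (1) all its satisfying valuations have even size, and (2) there are no two valuations $\nu,\nu'$ of even size with $|\nu'|<|\nu|$, $\nu\in\mathrm{sat}(\varphi)$ and $\nu'\notin\mathrm{sat}(\varphi)$. Write $\varphi\xrightarrow{+(\nu,l)}\varphi'$ if $\nu,\nu^{(l)}\notin\mathrm{sat}(\varphi)$ and $\mathrm{sat}(\varphi')=\mathrm{sat}(\varphi)\cup\{\nu,\nu^{(l)}\}$, and $\varphi\xrightarrow{-(\nu,l)}\varphi'$ if $\varphi'\xrightarrow{+(\nu,l)}\varphi$. Write $\varphi\xrightarrow{\pm}\varphi'$ if one of these holds for some $\nu,l$; $\simeq$ is the reflexive-transitive closure of $\xrightarrow{\pm}$ (an equivalence relation). *)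

theory Defs
  imports Main
begin

text \<open>A valuation is a subset of V. A Boolean function on V is
  represented as a predicate on nat sets that is false outside Pow V, so it is determined
  by its set of satisfying valuations.\<close>

definition boolfun_on :: "nat set \<Rightarrow> (nat set \<Rightarrow> bool) \<Rightarrow> bool" where
  "boolfun_on V \<phi> \<longleftrightarrow> (\<forall>\<nu>. \<phi> \<nu> \<longrightarrow> \<nu> \<subseteq> V)"

definition sat :: "(nat set \<Rightarrow> bool) \<Rightarrow> nat set set" where
  "sat \<phi> = {\<nu>. \<phi> \<nu>}"

definition flip :: "nat set \<Rightarrow> nat \<Rightarrow> nat set" where
  "flip \<nu> l = (if l \<in> \<nu> then \<nu> - {l} else insert l \<nu>)"

definition canonical :: "nat set \<Rightarrow> (nat set \<Rightarrow> bool) \<Rightarrow> bool" where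
  "canonical V \<phi> \<longleftrightarrow>
     (\<forall>\<nu>\<in>sat \<phi>. even (card \<nu>)) \<and>
     \<not> (\<exists>\<nu> \<nu>'. \<nu> \<subseteq> V \<and> \<nu>' \<subseteq> V \<and> even (card \<nu>) \<and> even (card \<nu>') \<and>
            card \<nu>' < card \<nu> \<and> \<nu> \<in> sat \<phi> \<and> \<nu>' \<notin> sat \<phi>)"

definition add_step :: "nat set \<Rightarrow> (nat set \<Rightarrow> bool) \<Rightarrow> nat set \<Rightarrow> nat \<Rightarrow> (nat set \<Rightarrow> bool) \<Rightarrow> bool" where
  "add_step V \<phi> \<nu> l \<phi>' \<longleftrightarrow> \<nu> \<subseteq> V \<and> l \<in> V \<and>
     \<nu> \<notin> sat \<phi> \<and> flip \<nu> l \<notin> sat \<phi> \<and> sat \<phi>' = sat \<phi> \<union> {\<nu>, flip \<nu> l}"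

definition pm_step :: "nat set \<Rightarrow> (nat set \<Rightarrow> bool) \<Rightarrow> (nat set \<Rightarrow> bool) \<Rightarrow> bool" where
  "pm_step V \<phi> \<phi>' \<longleftrightarrow> boolfun_on V \<phi> \<and> boolfun_on V \<phi>' \<and>
     (\<exists>\<nu> l. add_step V \<phi> \<nu> l \<phi>' \<or> add_step V \<phi>' \<nu> l \<phi>)"

definition equiv_bf :: "nat set \<Rightarrow> (nat set \<Rightarrow> bool) \<Rightarrow> (nat set \<Rightarrow> bool) \<Rightarrow> bool" where
  "equiv_bf V = (pm_step V)\<^sup>*\<^sup>*"

end

theory Submission
  imports Defs
begin

definition memf :: "nat set set \<Rightarrow> nat set \<Rightarrow> bool" where
  "memf S = (\<lambda>\<nu>. \<nu> \<in> S)"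

lemma sat_memf[simp]: "sat (memf S) = S"
  by (simp add: sat_def memf_def)

lemma boolfun_memf: "S \<subseteq> Pow V \<Longrightarrow> boolfun_on V (memf S)"
  by (auto simp: boolfun_on_def memf_def)

lemma flip_flip[simp]: "flip (flip a l) l = a"
  by (auto simp: flip_def)

lemma card_flip_parity:
  assumes "finite a" shows "even (card (flip a l)) \<longleftrightarrow> odd (card a)"
proof (cases "l \<in> a")
  case True
  then have "card a = Suc (card (a - {l}))" using assms
    by (metis card_Suc_Diff1)
  then show ?thesis using True by (simp add: flip_def)
next
  case False
  then show ?thesis using assms by (simp add: flip_def)
qed

lemma flip_sub: "a \<subseteq> V \<Longrightarrow> l \<in> V \<Longrightarrow> flip a l \<subseteq> V"
  by (auto simp: flip_def)

lemma move1:
  assumes V: "finite V" and S: "S \<subseteq> {x. x \<subseteq> V \<and> even (card x)}"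
    and a: "a \<in> S" and b: "b \<notin> S" and l1: "l1 \<in> V" and l2: "l2 \<in> V"
    and bd: "b = flip (flip a l1) l2" and bE: "b \<subseteq> V" "even (card b)"
  shows "equiv_bf V (memf S) (memf (insert b (S - {a})))"
proof -
  define w where "w = flip a l1"
  have aV: "a \<subseteq> V" "even (card a)" using a S by auto
  have wV: "w \<subseteq> V" using aV l1 by (simp add: w_def flip_sub)
  have wodd: "odd (card w)" using aV card_flip_parity[of a l1] V wV
    by (metis finite_subset w_def)
  have fb: "flip b l2 = w" using bd w_def by simp
  have wS: "w \<notin> S" using S wodd by auto
  have ab: "a \<noteq> b" using a b by auto
  have aw: "a \<noteq> w" "b \<noteq> w" using aV bE wodd by auto
  define S' where "S' = insert b (S - {a})"
  define M where "M = S \<union> {b, w}"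
  have SP: "S \<subseteq> Pow V" using S by auto
  have S'P: "S' \<subseteq> Pow V" using S bE by (auto simp: S'_def)
  have MP: "M \<subseteq> Pow V" using SP bE wV by (auto simp: M_def)
  have st1: "pm_step V (memf S) (memf M)"
    unfolding pm_step_def using boolfun_memf[OF SP] boolfun_memf[OF MP]
    apply (simp)
    apply (rule exI[of _ b], rule exI[of _ l2])
    using bE l2 b wS fb by (auto simp: add_step_def M_def)
  have "M = S' \<union> {a, w}" using a by (auto simp: M_def S'_def)
  have st2: "pm_step V (memf M) (memf S')"
    unfolding pm_step_def using boolfun_memf[OF S'P] boolfun_memf[OF MP]
    apply (simp)
    apply (rule exI[of _ a], rule exI[of _ l1])
    using aV l1 a wS ab aw \<open>M = S' \<union> {a, w}\<close>
    by (auto simp: add_step_def S'_def w_def)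
  show ?thesis unfolding equiv_bf_def S'_def[symmetric]
    using st1 st2 by auto
qed


lemma movepath:
  assumes V: "finite V"
  shows "\<And>S a b. card ((a - b) \<union> (b - a)) = n \<Longrightarrow> S \<subseteq> {x. x \<subseteq> V \<and> even (card x)} \<Longrightarrow>
    a \<in> S \<Longrightarrow> b \<notin> S \<Longrightarrow> b \<subseteq> V \<Longrightarrow> even (card b) \<Longrightarrow>
    equiv_bf V (memf S) (memf (insert b (S - {a})))"
proof (induction n rule: less_induct)
  case (less n S a b)
  let ?E = "{x. x \<subseteq> V \<and> even (card x)}"
  have aV: "a \<subseteq> V" "even (card a)" using less by auto
  have ab: "a \<noteq> b" using less by auto
  then obtain l1 where l1: "l1 \<in> (a - b) \<union> (b - a)" by blast
  define w where "w = flip a l1"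
  have l1V: "l1 \<in> V" using l1 aV less by auto
  have wV: "w \<subseteq> V" using aV l1V by (simp add: w_def flip_sub)
  have wodd: "odd (card w)" using aV card_flip_parity[of a l1] V wV
    by (metis finite_subset w_def)
  have "w \<noteq> b" using wodd less by auto
  then obtain l2 where l2: "l2 \<in> (w - b) \<union> (b - w)" by blast
  have l2V: "l2 \<in> V" using l2 wV less by auto
  have l12: "l1 \<noteq> l2" using l1 l2 by (auto simp: w_def flip_def)
  define c where "c = flip w l2"
  have cV: "c \<subseteq> V" using wV l2V by (simp add: c_def flip_sub)
  have ceven: "even (card c)" using wodd card_flip_parity[of w l2] V wV
    by (metis finite_subset c_def)
  have cE: "c \<in> ?E" using cV ceven by auto
  have ac: "a \<noteq> c" using l1 l12 by (auto simp: c_def w_def flip_def)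
  have cb: "(c - b) \<union> (b - c) = ((a - b) \<union> (b - a)) - {l1, l2}"
    using l1 l2 l12 by (auto simp: c_def w_def flip_def)
  have fin: "finite ((a - b) \<union> (b - a))" using aV less V by (meson finite_Un finite_Diff finite_subset)
  have lt: "card ((c - b) \<union> (b - c)) < n"
    unfolding cb less(2)[symmetric]
  proof -
    have "(a - b) \<union> (b - a) - {l1, l2} \<subset> (a - b) \<union> (b - a)" using l1 by blast
    then show "card ((a - b) \<union> (b - a) - {l1, l2}) < card ((a - b) \<union> (b - a))"
      by (rule psubset_card_mono[OF fin])
  qed
  show ?case
  proof (cases "c = b")
    case True
    then show ?thesis using move1[OF V less(3) less(4) less(5) l1V l2V] less c_def w_def by auto
  next
    case False
    show ?thesis
    proof (cases "c \<in> S")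
      case True
      define S1 where "S1 = insert b (S - {c})"
      have e1: "equiv_bf V (memf S) (memf S1)"
        using less(1)[OF lt refl less(3) True less(5) less(6) less(7)] S1_def by simp
      have S1E: "S1 \<subseteq> ?E" using less S1_def by auto
      have aS1: "a \<in> S1" "c \<notin> S1" using less ac False True ab by (auto simp: S1_def)
      have e2: "equiv_bf V (memf S1) (memf (insert c (S1 - {a})))"
        using move1[OF V S1E aS1 l1V l2V] c_def w_def cV ceven by auto
      have "insert c (S1 - {a}) = insert b (S - {a})"
        using True ac ab False by (auto simp: S1_def)
      then show ?thesis using e1 e2 unfolding equiv_bf_def by (metis rtranclp_trans)
    next
      case cS: False
      define S1 where "S1 = insert c (S - {a})"
      have e1: "equiv_bf V (memf S) (memf S1)"
        using move1[OF V less(3) less(4) cS l1V l2V] c_def w_def cV ceven S1_def by auto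
      have S1E: "S1 \<subseteq> ?E" using less S1_def cE by auto
      have cS1: "c \<in> S1" "b \<notin> S1" using less False by (auto simp: S1_def)
      have e2: "equiv_bf V (memf S1) (memf (insert b (S1 - {c})))"
        using less(1)[OF lt refl S1E cS1 less(6) less(7)] by simp
      have "insert b (S1 - {c}) = insert b (S - {a})"
        using cS ac by (auto simp: S1_def)
      then show ?thesis using e1 e2 unfolding equiv_bf_def by (metis rtranclp_trans)
    qed
  qed
qed

lemma reach:
  assumes V: "finite V"
  shows "\<And>S T. card (S - T) = n \<Longrightarrow> finite S \<Longrightarrow> finite T \<Longrightarrow> card S = card T \<Longrightarrow>
    S \<subseteq> {x. x \<subseteq> V \<and> even (card x)} \<Longrightarrow> T \<subseteq> {x. x \<subseteq> V \<and> even (card x)} \<Longrightarrow>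
    equiv_bf V (memf S) (memf T)"
proof (induction n)
  case 0
  then have "S \<subseteq> T" by auto
  then have "S = T" using 0 by (metis card_subset_eq)
  then show ?case by (simp add: equiv_bf_def)
next
  case (Suc n S T)
  then obtain a where a: "a \<in> S - T" by (metis card.empty ex_in_conv nat.distinct(1))
  have "T - S \<noteq> {}"
  proof
    assume "T - S = {}"
    then have "T \<subseteq> S" by auto
    then have "T = S" using Suc by (metis card_subset_eq)
    then show False using a by auto
  qed
  then obtain b where b: "b \<in> T - S" by blast
  define S1 where "S1 = insert b (S - {a})"
  have e1: "equiv_bf V (memf S) (memf S1)"
    using movepath[OF V refl, of S a b] Suc a b S1_def by auto
  have "S1 - T = (S - T) - {a}" using a b by (auto simp: S1_def)
  then have c1: "card (S1 - T) = n" using Suc a by simp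
  have "T \<noteq> {}" using b by auto
  then have "card T > 0" using Suc by auto
  then have "card S1 = card S" using a b Suc by (simp add: S1_def)
  have e2: "equiv_bf V (memf S1) (memf T)"
  proof (rule Suc.IH[OF c1])
    show "finite S1" using Suc by (simp add: S1_def)
    show "S1 \<subseteq> {x. x \<subseteq> V \<and> even (card x)}" using Suc b by (auto simp: S1_def)
  qed (use Suc \<open>card S1 = card S\<close> in auto)
  show ?case using e1 e2 unfolding equiv_bf_def by (metis rtranclp_trans)
qed

lemma exists_canon:
  assumes E: "finite E"
  shows "N \<le> card E \<Longrightarrow> \<exists>T. T \<subseteq> E \<and> card T = N \<and>
     (\<forall>x\<in>T. \<forall>y\<in>E. card y < card x \<longrightarrow> y \<in> T)"
proof (induction N)
  case 0
  show ?case by (intro exI[of _ "{}"]) auto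
next
  case (Suc N)
  then obtain T where T: "T \<subseteq> E" "card T = N" "\<forall>x\<in>T. \<forall>y\<in>E. card y < card x \<longrightarrow> y \<in> T" by auto
  have "E - T \<noteq> {}"
  proof
    assume "E - T = {}"
    then have "E \<subseteq> T" by blast
    then have "card E \<le> card T" using T(1) E by (meson card_mono finite_subset)
    then show False using T(2) Suc.prems by simp
  qed
  define y where "y = arg_min_on card (E - T)"
  have y: "y \<in> E - T" using arg_min_if_finite(1)[of "E - T" card] E \<open>E - T \<noteq> {}\<close> y_def by auto
  have ymin: "\<forall>z\<in>E - T. \<not> card z < card y"
    using arg_min_if_finite(2)[of "E - T" card] E \<open>E - T \<noteq> {}\<close> y_def by auto
  show ?case
  proof (rule exI[of _ "insert y T"], intro conjI)
    show "insert y T \<subseteq> E" using T y by auto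
    show "card (insert y T) = Suc N" using T y E by (metis DiffD2 card_insert_disjoint finite_subset)
    show "\<forall>x\<in>insert y T. \<forall>z\<in>E. card z < card x \<longrightarrow> z \<in> insert y T"
      using T ymin by blast
  qed
qed

theorem lemma6p7:
  fixes k :: nat and \<phi> :: "nat set \<Rightarrow> bool"
  assumes "k \<ge> 1"
    and "boolfun_on {0..k} \<phi>"
    and "\<forall>\<nu>\<in>sat \<phi>. even (card \<nu>)"
  shows "\<exists>\<phi>c. boolfun_on {0..k} \<phi>c \<and> canonical {0..k} \<phi>c \<and> equiv_bf {0..k} \<phi>c \<phi>"
proof -
  define V where "V = {0..k}"
  define E where "E = {x. x \<subseteq> V \<and> even (card x)}"
  have finV: "finite V" by (simp add: V_def)
  have finE: "finite E" using finV unfolding E_def by (simp add: finite_Collect_subsets)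
  have satE: "sat \<phi> \<subseteq> E" using assms(2,3) by (auto simp: E_def V_def boolfun_on_def sat_def)
  have finS: "finite (sat \<phi>)" using satE finE finite_subset by blast
  obtain T where T: "T \<subseteq> E" "card T = card (sat \<phi>)"
     "\<forall>x\<in>T. \<forall>y\<in>E. card y < card x \<longrightarrow> y \<in> T"
    using exists_canon[OF finE, of "card (sat \<phi>)"] card_mono[OF finE satE] by auto
  have finT: "finite T" using T finE finite_subset by blast
  have phi: "memf (sat \<phi>) = \<phi>" by (simp add: memf_def sat_def)
  have eq: "equiv_bf V (memf T) (memf (sat \<phi>))"
    using reach[OF finV refl finT finS T(2)] T(1) satE unfolding E_def by auto
  have bf: "boolfun_on V (memf T)" using T(1) by (intro boolfun_memf) (auto simp: E_def)
  have can: "canonical V (memf T)"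
    using T(1,3) unfolding canonical_def E_def by auto
  show ?thesis using eq bf can phi unfolding V_def by metis
qed

end
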